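(* Let $D\ge1$, $P>0$, $\sigma_1^2,\sigma_2^2>0$, $\alpha_k>0$, $\beta_k>0$ for $k=1,\dots,D$, let $d_k\ge0$ be fixed with at least one $d_k>0$, and let $\varepsilon\in[0,1)$ be fixed. Consider the problem $$\max_{q_1,\dots,q_D\ge0}\;\frac{1-\varepsilon}{2}\sum_{k=1}^D\log_2\frac{\left(1+\frac{\alpha_k}{\sigma_1^2}q_k\right)\left(1+\frac{\beta_k}{\sigma_2^2}d_k\right)}{1+\frac{\alpha_k}{\sigma_1^2}q_k+\frac{\beta_k}{\sigma_2^2}d_k}\quad\text{s.t.}\quad\sum_{k=1}^D q_k\le P.$$ This problem is convex (the objective is concave in $(q_1,\dots,q_D)$), and for $\mu_2>0$ define $$q_k(\mu_2)=\frac{\sigma_1^2}{2\alpha_k}\left[\sqrt{\left(\frac{\beta_k}{\sigma_2^2}d_k\right)^2+\frac{2(1-\varepsilon)\beta_kd_k\alpha_k\mu_2}{\sigma_1^2\sigma_2^2\ln2}}-\frac{\beta_k}{\sigma_2^2}d_k-2\right]^+.$$ Then there exists $\mu_2^*>0$ with $\sum_{k=1}^D q_k(\mu_2^* )=P$, and for any such $\mu_2^*$ the vector $(q_1(\mu_2^* ),\dots,q_D(\mu_2^* ))$ is an optimal solution of the problem.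
   Context: This is the subproblem, with relay variables $d_k$ and time-switching ratio $\varepsilon$ fixed, of the joint source/relay/TS-ratio design for an energy-harvesting MIMO relay: $q_k$ is the power allocated by the source to the $k$-th eigenmode, $P$ the source power budget, $\alpha_k,\beta_k$ the squared singular values of the source–relay and relay–destination channels, and $\sigma_1^2,\sigma_2^2$ the noise variances at relay and destination. $(a)^+=\max\{0,a\}$. *)

theory Defs
  imports "HOL-Analysis.Analysis"
begin

text \<open>Eigenmodes are indexed by a finite type 'n with D = CARD('n).
  s1, s2 denote the noise variances sigma_1^2, sigma_2^2.\<close>

definition rate ::
  "real \<Rightarrow> real \<Rightarrow> real \<Rightarrow> real^'n \<Rightarrow> real^'n \<Rightarrow> real^'n \<Rightarrow> real^'n \<Rightarrow> real" where
  "rate eps s1 s2 \<alpha> \<beta> d q =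
     (1 - eps) / 2 *
     (\<Sum>k\<in>UNIV. log 2 (((1 + \<alpha>$k / s1 * q$k) * (1 + \<beta>$k / s2 * d$k)) /
                        (1 + \<alpha>$k / s1 * q$k + \<beta>$k / s2 * d$k)))"

definition feasible :: "real \<Rightarrow> real^'n \<Rightarrow> bool" where
  "feasible P q \<longleftrightarrow> (\<forall>k. 0 \<le> q$k) \<and> (\<Sum>k\<in>UNIV. q$k) \<le> P"

definition qmu ::
  "real \<Rightarrow> real \<Rightarrow> real \<Rightarrow> real^'n \<Rightarrow> real^'n \<Rightarrow> real^'n \<Rightarrow> real \<Rightarrow> real^'n" where
  "qmu eps s1 s2 \<alpha> \<beta> d \<mu> = (\<chi> k.
     s1 / (2 * \<alpha>$k) *
     max 0 (sqrt ((\<beta>$k / s2 * d$k)^2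
                  + 2 * (1 - eps) * \<beta>$k * d$k * \<alpha>$k * \<mu> / (s1 * s2 * ln 2))
            - \<beta>$k / s2 * d$k - 2))"

end

theory Submission
  imports Defs
begin

definition phi :: "real \<Rightarrow> real \<Rightarrow> real \<Rightarrow> real" where
  "phi a B x = ln (1 + a*x) + ln (1 + B) - ln (1 + a*x + B)"

lemma phi_deriv:
  assumes a: "a > 0" and B: "B \<ge> 0" and x: "x > -1/a"
  shows "((\<lambda>x. - phi a B x) has_real_derivative - (a*B/((1+a*x)*(1+a*x+B)))) (at x)"
proof -
  have p1: "1 + a*x > 0" using a x by (simp add: field_simps)
  have p2: "1 + a*x + B > 0" using p1 B by simp
  have d1: "((\<lambda>x. ln (1 + a*x)) has_real_derivative (a / (1 + a*x))) (at x)"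
    using p1
    by (auto intro!: derivative_eq_intros)
  have d2: "((\<lambda>x. ln (1 + a*x + B)) has_real_derivative (a / (1 + a*x + B))) (at x)"
    using p2
    by (auto intro!: derivative_eq_intros)
  have d3: "((\<lambda>x. - phi a B x) has_real_derivative - (a / (1 + a*x) + 0 - a / (1 + a*x + B))) (at x)"
    unfolding phi_def by (intro DERIV_minus DERIV_diff DERIV_add d1 d2 DERIV_const)
  have e: "a / (1 + a*x) + 0 - a / (1 + a*x + B) = a*B/((1+a*x)*(1+a*x+B))"
    using p1 p2 by (simp add: field_simps)
  show ?thesis using d3 unfolding e .
qed

lemma phi_convex:
  assumes a: "a > 0" and B: "B \<ge> 0"
  shows "convex_on {-1/a<..} (\<lambda>x. - phi a B x)"
proof (rule convex_on_realI[where f'="\<lambda>x. - (a*B/((1+a*x)*(1+a*x+B)))"])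
  show "connected {-1/a<..}" by simp
  show "\<And>x. x \<in> {-1/a<..} \<Longrightarrow> ((\<lambda>x. - phi a B x) has_real_derivative - (a*B/((1+a*x)*(1+a*x+B)))) (at x)"
    using phi_deriv a B by auto
  fix x y assume x: "x \<in> {-1/a<..}" and y: "y \<in> {-1/a<..}" and xy: "x \<le> y"
  have p1: "1 + a*x > 0" using a x by (simp add: field_simps)
  have p2: "1 + a*x + B > 0" using p1 B by simp
  have le1: "1 + a*x \<le> 1 + a*y" using xy a by simp
  have "(1+a*x)*(1+a*x+B) \<le> (1+a*y)*(1+a*y+B)"
    using le1 p1 p2 by (intro mult_mono) auto
  moreover have "(1+a*x)*(1+a*x+B) > 0" using p1 p2 by simp
  ultimately have "a*B/((1+a*y)*(1+a*y+B)) \<le> a*B/((1+a*x)*(1+a*x+B))"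
    using a B by (intro divide_left_mono) auto
  then show "- (a*B/((1+a*x)*(1+a*x+B))) \<le> - (a*B/((1+a*y)*(1+a*y+B)))" by simp
qed

lemma phi_tangent:
  assumes a: "a > 0" and B: "B \<ge> 0" and c: "c \<ge> 0" and x: "x \<ge> 0"
  shows "phi a B x \<le> phi a B c + a*B/((1+a*c)*(1+a*c+B)) * (x - c)"
proof -
  have ma: "-1/a < 0" using a by simp
  have "- phi a B x - (- phi a B c) \<ge> - (a*B/((1+a*c)*(1+a*c+B))) * (x - c)"
  proof (rule convex_on_imp_above_tangent[OF phi_convex[OF a B]])
    have cc: "c > -1/a" using ma c by linarith
    have xx: "x > -1/a" using ma x by linarith
    show "connected {-1/a<..}" by simp
    show "c \<in> interior {-1/a<..}" using cc by (simp add: interior_open)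
    show "x \<in> {-1/a<..}" using xx by simp
    show "((\<lambda>x. - phi a B x) has_real_derivative - (a*B/((1+a*c)*(1+a*c+B)))) (at c within {-1/a<..})"
      by (rule has_field_derivative_at_within[OF phi_deriv[OF a B cc]])
  qed
  then show ?thesis by (simp add: algebra_simps)
qed


lemma kkt1:
  assumes a: "a > 0" and B: "B \<ge> 0" and c: "c > 0" and mu: "\<mu> > 0" and x: "x \<ge> 0"
    and qs: "qs = 1/(2*a) * max 0 (sqrt (B^2 + 4*(c*a*B*\<mu>)) - B - 2)"
  shows "c * phi a B x - x/\<mu> \<le> c * phi a B qs - qs/\<mu>"
proof -
  define S where "S = sqrt (B^2 + 4*(c*a*B*\<mu>))"
  have K0: "c*a*B*\<mu> \<ge> 0" using a B c mu by simp
  have "0 \<le> B^2 + 4*(c*a*B*\<mu>)" using K0 by (intro add_nonneg_nonneg) auto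
  then have S2: "S^2 = B^2 + 4*(c*a*B*\<mu>)" and S0: "S \<ge> 0" unfolding S_def by simp_all
  have qs0: "qs \<ge> 0" using qs a by simp
  define D where "D = a*B/((1+a*qs)*(1+a*qs+B))"
  have tan: "phi a B x \<le> phi a B qs + D * (x - qs)"
    unfolding D_def by (rule phi_tangent[OF a B qs0 x])
  have key: "c * D * (x - qs) \<le> (x - qs)/\<mu>"
  proof (cases "S - B - 2 > 0")
    case True
    then have qse: "qs = (S - B - 2)/(2*a)" using qs unfolding S_def by simp
    have h1: "1 + a*qs = (S - B)/2" using qse a by (simp add: field_simps)
    have prod: "(1+a*qs)*(1+a*qs+B) = c*a*B*\<mu>"
      unfolding h1 using S2 by (simp add: field_simps power2_eq_square)
    have p1: "(S-B)/2 > 0" using True by simp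
    have p2: "(S-B)/2 + B > 0" using p1 B by linarith
    have pos: "c*a*B*\<mu> > 0" using prod h1 p1 p2 by (metis mult_pos_pos)
    then have "B > 0" using a c mu B by (metis less_eq_real_def mult_eq_0_iff mult_zero_right)
    have "c * D = 1/\<mu>" unfolding D_def prod using pos a c mu \<open>B>0\<close> by (simp add: field_simps)
    then show ?thesis by simp
  next
    case False
    then have qse: "qs = 0" using qs unfolding S_def by simp
    have "S \<le> B + 2" using False by simp
    then have "S^2 \<le> (B+2)^2" using S0 by (intro power_mono) auto
    then have "c*a*B*\<mu> \<le> 1 + B" using S2 by (simp add: power2_eq_square algebra_simps)
    then have "c*a*B/(1+B) \<le> 1/\<mu>" using mu B by (simp add: field_simps)
    moreover have "c*D = c*a*B/(1+B)" unfolding D_def qse by simp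
    ultimately have "c*D*x \<le> x/\<mu>" using x
      by (metis divide_inverse mult_right_mono mult.commute mult_1)
    then show ?thesis using qse by simp
  qed
  have "c * phi a B x \<le> c * phi a B qs + c * D * (x - qs)"
  proof -
    have "c * phi a B x \<le> c * (phi a B qs + D * (x - qs))"
      using tan c by (intro mult_left_mono) auto
    then show ?thesis by (simp add: algebra_simps)
  qed
  moreover have "(x-qs)/\<mu> = x/\<mu> - qs/\<mu>" by (simp add: diff_divide_distrib)
  ultimately show ?thesis using key by linarith
qed

theorem mainTheorem3:
  fixes P s1 s2 eps :: real and \<alpha> \<beta> d :: "real^'n"
  assumes "P > 0" and "s1 > 0" and "s2 > 0"
    and "\<forall>k. \<alpha>$k > 0" and "\<forall>k. \<beta>$k > 0"
    and "\<forall>k. d$k \<ge> 0" and "\<exists>k. d$k > 0"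
    and "0 \<le> eps" and "eps < 1"
  shows "concave_on {q. \<forall>k. 0 \<le> q$k} (rate eps s1 s2 \<alpha> \<beta> d)
    \<and> (\<exists>\<mu>>0. (\<Sum>k\<in>UNIV. qmu eps s1 s2 \<alpha> \<beta> d \<mu> $ k) = P)
    \<and> (\<forall>\<mu>>0. (\<Sum>k\<in>UNIV. qmu eps s1 s2 \<alpha> \<beta> d \<mu> $ k) = P \<longrightarrow>
          feasible P (qmu eps s1 s2 \<alpha> \<beta> d \<mu>) \<and>
          (\<forall>q. feasible P q \<longrightarrow>
               rate eps s1 s2 \<alpha> \<beta> d q \<le> rate eps s1 s2 \<alpha> \<beta> d (qmu eps s1 s2 \<alpha> \<beta> d \<mu>)))"
proof -
  note P = assms(1) and s1 = assms(2) and s2 = assms(3) and al = assms(4) and be = assms(5)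
    and dn = assms(6) and dp = assms(7) and e0 = assms(8) and e1 = assms(9)
  define a where "a = (\<lambda>k. \<alpha>$k / s1)"
  define B where "B = (\<lambda>k. \<beta>$k / s2 * d$k)"
  define c where "c = (1 - eps) / (2 * ln 2)"
  have apos: "a k > 0" for k using al s1 unfolding a_def by simp
  have Bnn: "B k \<ge> 0" for k
  proof -
    have "\<beta>$k > 0" "d$k \<ge> 0" using be dn by auto
    then show ?thesis unfolding B_def using s2 by simp
  qed
  have cpos: "c > 0" using e1 unfolding c_def by simp
  have term_eq: "log 2 (((1 + a k * x) * (1 + B k)) / (1 + a k * x + B k)) = phi (a k) (B k) x / ln 2"
    if x: "x \<ge> 0" for k x
  proof -
    have p1: "1 + a k * x > 0" using apos[of k] x by (simp add: add_pos_nonneg)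
    have p2: "1 + a k * x + B k > 0" using p1 Bnn[of k] by linarith
    have p3: "1 + B k > 0" using Bnn[of k] by linarith
    show ?thesis unfolding log_def phi_def using p1 p2 p3 by (simp add: ln_mult ln_div)
  qed
  have rate_eq: "rate eps s1 s2 \<alpha> \<beta> d q = (\<Sum>k\<in>UNIV. c * phi (a k) (B k) (q$k))"
    if q: "\<forall>k. 0 \<le> q$k" for q
  proof -
    have "rate eps s1 s2 \<alpha> \<beta> d q = (1 - eps) / 2 *
       (\<Sum>k\<in>UNIV. log 2 (((1 + a k * q$k) * (1 + B k)) / (1 + a k * q$k + B k)))"
      unfolding rate_def a_def B_def by simp
    also have "\<dots> = (1 - eps) / 2 * (\<Sum>k\<in>UNIV. phi (a k) (B k) (q$k) / ln 2)"
      using term_eq q by simp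
    also have "\<dots> = (\<Sum>k\<in>UNIV. c * phi (a k) (B k) (q$k))"
      unfolding c_def sum_distrib_left by (intro sum.cong) auto
    finally show ?thesis .
  qed
  have qmu_eq: "qmu eps s1 s2 \<alpha> \<beta> d \<mu> $ k
      = 1/(2*a k) * max 0 (sqrt ((B k)^2 + 4*(c*a k*B k*\<mu>)) - B k - 2)" for \<mu> k
  proof -
    have e1: "2 * (1 - eps) * \<beta>$k * d$k * \<alpha>$k * \<mu> / (s1 * s2 * ln 2) = 4*(c*a k*B k*\<mu>)"
      unfolding a_def B_def c_def using s1 s2 by (simp add: field_simps)
    have e2: "s1 / (2 * \<alpha>$k) = 1/(2*a k)" unfolding a_def using s1 by simp
    have e3: "\<beta>$k / s2 * d$k = B k" unfolding B_def by simp
    have "qmu eps s1 s2 \<alpha> \<beta> d \<mu> $ k = s1 / (2 * \<alpha>$k) *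
     max 0 (sqrt ((\<beta>$k / s2 * d$k)^2
                  + 2 * (1 - eps) * \<beta>$k * d$k * \<alpha>$k * \<mu> / (s1 * s2 * ln 2))
            - \<beta>$k / s2 * d$k - 2)" by (simp only: qmu_def vec_lambda_beta)
    then show ?thesis by (simp only: e1 e2 e3)
  qed
  have qmu_nn: "qmu eps s1 s2 \<alpha> \<beta> d \<mu> $ k \<ge> 0" for \<mu> k
    unfolding qmu_eq using apos[of k] by simp
  have part1: "concave_on {q. \<forall>k. 0 \<le> q$k} (rate eps s1 s2 \<alpha> \<beta> d)"
    unfolding concave_on_iff
  proof (intro conjI ballI allI impI)
    show "convex {q::real^'n. \<forall>k. 0 \<le> q$k}"
      unfolding convex_def by auto
    fix x y :: "real^'n" and u v :: real
    assume x: "x \<in> {q. \<forall>k. 0 \<le> q$k}" and y: "y \<in> {q. \<forall>k. 0 \<le> q$k}"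
      and u: "0 \<le> u" and v: "0 \<le> v" and uv: "u + v = 1"
    have xy: "\<forall>k. 0 \<le> (u *\<^sub>R x + v *\<^sub>R y)$k" using x y u v by simp
    have "u * rate eps s1 s2 \<alpha> \<beta> d x + v * rate eps s1 s2 \<alpha> \<beta> d y
        = (\<Sum>k\<in>UNIV. c * (u * phi (a k) (B k) (x$k) + v * phi (a k) (B k) (y$k)))"
      using x y by (simp add: rate_eq sum_distrib_left sum.distrib algebra_simps)
    also have "\<dots> \<le> (\<Sum>k\<in>UNIV. c * phi (a k) (B k) ((u *\<^sub>R x + v *\<^sub>R y)$k))"
    proof (intro sum_mono mult_left_mono)
      fix k
      have cv: "convex_on {-1/a k<..} (\<lambda>x. - phi (a k) (B k) x)"
        by (rule phi_convex[OF apos Bnn])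
      have m: "-1/a k < 0" using apos[of k] by simp
      have "x$k \<ge> 0" "y$k \<ge> 0" using x y by auto
      then have "-1/a k < x$k" "-1/a k < y$k" using m by linarith+
      then have xk: "x$k \<in> {-1/a k<..}" and yk: "y$k \<in> {-1/a k<..}" by simp_all
      have "- phi (a k) (B k) (u * x$k + v * y$k) \<le> u * (- phi (a k) (B k) (x$k)) + v * (- phi (a k) (B k) (y$k))"
        using cv xk yk u v uv unfolding convex_on_def by simp
      then show "u * phi (a k) (B k) (x$k) + v * phi (a k) (B k) (y$k) \<le> phi (a k) (B k) ((u *\<^sub>R x + v *\<^sub>R y)$k)"
        by simp
    qed (use cpos in simp)
    also have "\<dots> = rate eps s1 s2 \<alpha> \<beta> d (u *\<^sub>R x + v *\<^sub>R y)"
      using rate_eq[OF xy] by simp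
    finally show "u * rate eps s1 s2 \<alpha> \<beta> d x + v * rate eps s1 s2 \<alpha> \<beta> d y
        \<le> rate eps s1 s2 \<alpha> \<beta> d (u *\<^sub>R x + v *\<^sub>R y)" .
  qed
  define F where "F = (\<lambda>\<mu>. \<Sum>k\<in>UNIV. qmu eps s1 s2 \<alpha> \<beta> d \<mu> $ k)"
  have F_eq: "F = (\<lambda>\<mu>. \<Sum>k\<in>UNIV. 1/(2*a k) * max 0 (sqrt ((B k)^2 + 4*(c*a k*B k*\<mu>)) - B k - 2))"
    unfolding F_def qmu_eq ..
  obtain k0 where dk0: "d$k0 > 0" using dp by blast
  have B0: "B k0 > 0" unfolding B_def using dk0 be s2 by simp
  define E where "E = 4*(c * a k0 * B k0)"
  have E0: "E > 0" unfolding E_def using cpos apos[of k0] B0 by simp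
  define T where "T = 2*a k0*P + B k0 + 2"
  have T0: "T > 0" unfolding T_def using apos[of k0] P B0 by (simp add: add_pos_pos)
  define M where "M = T^2 / E"
  have M0: "M \<ge> 0" unfolding M_def using E0 by simp
  have Fcont: "continuous_on {0..M} F" unfolding F_eq by (intro continuous_intros)
  have F0: "F 0 = 0" unfolding F_eq using Bnn by simp
  have FM: "P \<le> F M"
  proof -
    have "4*(c*a k0*B k0*M) = E * M" unfolding E_def by simp
    also have "\<dots> = T^2" unfolding M_def using E0 by simp
    finally have EM: "4*(c*a k0*B k0*M) = T^2" .
    have "sqrt ((B k0)^2 + 4*(c*a k0*B k0*M)) \<ge> T"
      unfolding EM using T0 by (simp add: real_le_rsqrt)
    then have "max 0 (sqrt ((B k0)^2 + 4*(c*a k0*B k0*M)) - B k0 - 2) \<ge> 2*a k0*P"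
      unfolding T_def by simp
    then have "1/(2*a k0) * max 0 (sqrt ((B k0)^2 + 4*(c*a k0*B k0*M)) - B k0 - 2) \<ge> 1/(2*a k0) * (2*a k0*P)"
      using apos[of k0] by (intro mult_left_mono) auto
    then have t: "P \<le> qmu eps s1 s2 \<alpha> \<beta> d M $ k0" unfolding qmu_eq using apos[of k0] by simp
    also have "\<dots> \<le> F M" unfolding F_def
      by (rule member_le_sum) (auto simp: qmu_nn)
    finally show ?thesis .
  qed
  obtain \<mu> where mu: "0 \<le> \<mu>" "\<mu> \<le> M" "F \<mu> = P"
    using IVT'[of F 0 P M] F0 FM M0 Fcont P by auto
  have "\<mu> \<noteq> 0" using mu F0 P by auto
  with mu have part2: "\<exists>\<mu>>0. (\<Sum>k\<in>UNIV. qmu eps s1 s2 \<alpha> \<beta> d \<mu> $ k) = P"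
    unfolding F_def by (intro exI[of _ \<mu>]) auto
  have part3: "\<forall>\<mu>>0. (\<Sum>k\<in>UNIV. qmu eps s1 s2 \<alpha> \<beta> d \<mu> $ k) = P \<longrightarrow>
          feasible P (qmu eps s1 s2 \<alpha> \<beta> d \<mu>) \<and>
          (\<forall>q. feasible P q \<longrightarrow>
               rate eps s1 s2 \<alpha> \<beta> d q \<le> rate eps s1 s2 \<alpha> \<beta> d (qmu eps s1 s2 \<alpha> \<beta> d \<mu>))"
  proof (intro allI impI conjI)
    fix \<mu> :: real assume mu: "\<mu> > 0" and sP: "(\<Sum>k\<in>UNIV. qmu eps s1 s2 \<alpha> \<beta> d \<mu> $ k) = P"
    define qs where "qs = qmu eps s1 s2 \<alpha> \<beta> d \<mu>"
    have qsn: "\<forall>k. 0 \<le> qs$k" unfolding qs_def using qmu_nn by simp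
    show "feasible P (qmu eps s1 s2 \<alpha> \<beta> d \<mu>)"
      unfolding feasible_def using qmu_nn sP by simp
    fix q :: "real^'n" assume fq: "feasible P q"
    then have qn: "\<forall>k. 0 \<le> q$k" and qP: "(\<Sum>k\<in>UNIV. q$k) \<le> P" unfolding feasible_def by auto
    have per: "c * phi (a k) (B k) (q$k) - q$k/\<mu> \<le> c * phi (a k) (B k) (qs$k) - qs$k/\<mu>" for k
      by (rule kkt1[OF apos Bnn cpos mu]) (use qn in auto, simp add: qs_def qmu_eq)
    have "(\<Sum>k\<in>UNIV. c * phi (a k) (B k) (q$k) - q$k/\<mu>) \<le> (\<Sum>k\<in>UNIV. c * phi (a k) (B k) (qs$k) - qs$k/\<mu>)"
      by (intro sum_mono per)
    then have "rate eps s1 s2 \<alpha> \<beta> d q - (\<Sum>k\<in>UNIV. q$k)/\<mu> \<le> rate eps s1 s2 \<alpha> \<beta> d qs - (\<Sum>k\<in>UNIV. qs$k)/\<mu>"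
      by (simp add: rate_eq[OF qn] rate_eq[OF qsn] sum_subtractf sum_divide_distrib)
    moreover have "(\<Sum>k\<in>UNIV. q$k)/\<mu> \<le> (\<Sum>k\<in>UNIV. qs$k)/\<mu>"
      using qP sP mu unfolding qs_def by (intro divide_right_mono) auto
    ultimately show "rate eps s1 s2 \<alpha> \<beta> d q \<le> rate eps s1 s2 \<alpha> \<beta> d (qmu eps s1 s2 \<alpha> \<beta> d \<mu>)"
      unfolding qs_def by linarith
  qed
  show ?thesis using part1 part2 part3 by blast
qed

end
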